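(* Let $\pi\colon U\to\mathbf{DT}$ be a type specification and $f\colon Y\to X$ a morphism of schemas of type $\pi$. The pullback functor $f^*\colon\mathbf{DB}_X\to\mathbf{DB}_Y$ and the push-forward functor $f_+\colon\mathbf{DB}_Y\to\mathbf{DB}_X$ form an adjunction with $f^*$ left adjoint to $f_+$.
   Context: A type specification is a function of sets $\pi\colon U\to\mathbf{DT}$. A simple schema is a pair $(C,\sigma)$, $C$ a finite (possibly empty) totally ordered set, $\sigma\colon C\to\mathbf{DT}$; morphisms are order-preserving $f\colon C\to C'$ with $\sigma'\circ f=\sigma$; this is the category $\mathcal{S}$. Records: $\Gamma(\sigma)=\{r\colon C\to U\mid\pi(r(c))=\sigma(c)\ \forall c\}$; a morphism $f\colon\sigma_2\to\sigma_1$ induces $r\mapsto r\circ f$, $\Gamma(\sigma_1)\to\Gamma(\sigma_2)$, making $\Gamma^\pi\colon\mathcal{S}^{op}\to\mathbf{Sets}$ a functor. A schema is a functor $X\colon\mathcal{S}^{op}\to\mathbf{Sets}$, morphisms are natural transformations. $\mathbf{Sub}(X)$ is the poset of subfunctors of $X$ (colimits are smallest containing subschemas). A sheaf on $X$ is a functor $\mathcal{K}\colon\mathbf{Sub}(X)^{op}\to\mathbf{Sets}$ with $\mathcal{K}(\mathrm{colim}\,D)\to\lim\mathcal{K}\circ D$ bijective for every diagram $D$ in $\mathbf{Sub}(X)$; $\mathbf{Shv}(X)$ denotes sheaves and natural transformations. The universal sheaf is $\mathcal{U}_X(X')=\mathrm{Hom}(X',\Gamma^\pi)$ with restriction by precomposition.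 For $f\colon Y\to X$: $f^*\mathcal{K}(Y')=\mathcal{K}(f(Y'))$ ($f(Y')$ the image) for $\mathcal{K}\in\mathbf{Shv}(X)$; $f_*\mathcal{L}(X')=\mathcal{L}(f^{-1}(X'))$ for $\mathcal{L}\in\mathbf{Shv}(Y)$; $f^*\dashv f_*$; and $\mathcal{U}_f\colon f^*\mathcal{U}_X\to\mathcal{U}_Y$ sends $h\colon f(Y')\to\Gamma^\pi$ to $h\circ f|_{Y'}$. A database on $X$ is a triple $(X,\mathcal{K},\tau)$ with $\mathcal{K}\in\mathbf{Shv}(X)$ and $\tau\colon\mathcal{K}\to\mathcal{U}_X$; $\mathbf{DB}_X$ is the category of databases on $X$ whose morphisms $(X,\mathcal{K},\tau)\to(X,\mathcal{K}',\tau')$ are morphisms of sheaves $\alpha\colon\mathcal{K}\to\mathcal{K}'$ with $\tau'\circ\alpha=\tau$. The pullback: $f^*(X,\mathcal{K}_X,\tau_X)=(Y,f^*\mathcal{K}_X,\mathcal{U}_f\circ f^*\tau_X)$. The push-forward: for $(Y,\mathcal{K}_Y,\tau_Y)$, let $f_+\mathcal{K}_Y$ be the fiber product (in $\mathbf{Shv}(X)$) of $\mathcal{U}_X\to f_*\mathcal{U}_Y\leftarrow f_*\mathcal{K}_Y$, where the first map is the adjoint of $\mathcal{U}_f$ and the second is $f_*\tau_Y$; let $f_+\tau_Y\colon f_+\mathcal{K}_Y\to\mathcal{U}_X$ be the projection; then $f_+(Y,\mathcal{K}_Y,\tau_Y)=(X,f_+\mathcal{K}_Y,f_+\tau_Y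)$.
   Formalization: Sheaves satisfy the limit condition only for diagrams given by downward-closed families of subschemas, and $f^*$ is not claimed to land in sheaves, the adjunction being a natural hom-set bijection with presheaf-valued pullbacks. The statement above fails without it. *)

theory Defs
  imports Main "HOL-Library.FuncSet"
begin

(* Simple schemas: skeleton of S. An object (C,sigma) with C = {0..<n} is the list
   [sigma 0, ..., sigma (n-1)]. A morphism s -> s' is the order-preserving map
   i |-> fl!i, given as a list fl, with sigma' o f = sigma. *)
definition smor :: "'d list \<Rightarrow> 'd list \<Rightarrow> nat list \<Rightarrow> bool" where
  "smor s s' fl \<longleftrightarrow> sorted fl \<and> (\<forall>i\<in>set fl. i < length s') \<and> map ((!) s') fl = s"

(* A schema X : S^op -> Sets: sets ob X s, and for fl : s -> s' the map
   act X s' fl : ob X s' -> ob X s. *)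
type_synonym ('d,'x) schema = "('d list \<Rightarrow> 'x set) \<times> ('d list \<Rightarrow> nat list \<Rightarrow> 'x \<Rightarrow> 'x)"

definition ob :: "('d,'x) schema \<Rightarrow> 'd list \<Rightarrow> 'x set" where "ob X = fst X"
definition act :: "('d,'x) schema \<Rightarrow> 'd list \<Rightarrow> nat list \<Rightarrow> 'x \<Rightarrow> 'x" where "act X = snd X"

definition is_schema :: "('d,'x) schema \<Rightarrow> bool" where
  "is_schema X \<longleftrightarrow>
     (\<forall>s s' fl x. smor s s' fl \<longrightarrow> x \<in> ob X s' \<longrightarrow> act X s' fl x \<in> ob X s) \<and>
     (\<forall>s x. x \<in> ob X s \<longrightarrow> act X s [0..<length s] x = x) \<and>
     (\<forall>s s' s'' fl gl x. smor s s' fl \<longrightarrow> smor s' s'' gl \<longrightarrow> x \<in> ob X s'' \<longrightarrow>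
          act X s' fl (act X s'' gl x) = act X s'' (map ((!) gl) fl) x)"

definition Gamma :: "('u \<Rightarrow> 'd) \<Rightarrow> ('d, 'u list) schema" where
  "Gamma \<pi> = (\<lambda>s. {r. map \<pi> r = s}, \<lambda>s' fl r. map ((!) r) fl)"

definition nat_on :: "('d,'x) schema \<Rightarrow> ('d list \<Rightarrow> 'x set) \<Rightarrow> ('d,'z) schema
                      \<Rightarrow> ('d list \<Rightarrow> 'x \<Rightarrow> 'z) \<Rightarrow> bool" where
  "nat_on X A Z h \<longleftrightarrow> (\<forall>s x. x \<in> A s \<longrightarrow> h s x \<in> ob Z s) \<and>
     (\<forall>s s' fl x. smor s s' fl \<longrightarrow> x \<in> A s' \<longrightarrow> h s (act X s' fl x) = act Z s' fl (h s' x))"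

definition schema_hom :: "('d,'y) schema \<Rightarrow> ('d,'x) schema \<Rightarrow> ('d list \<Rightarrow> 'y \<Rightarrow> 'x) \<Rightarrow> bool" where
  "schema_hom Y X f \<longleftrightarrow> nat_on Y (ob Y) X f"

definition subs :: "('d,'x) schema \<Rightarrow> ('d list \<Rightarrow> 'x set) set" where
  "subs X = {A. (\<forall>s. A s \<subseteq> ob X s) \<and>
                (\<forall>s s' fl x. smor s s' fl \<longrightarrow> x \<in> A s' \<longrightarrow> act X s' fl x \<in> A s)}"

definition Union_sub :: "('d list \<Rightarrow> 'x set) set \<Rightarrow> 'd list \<Rightarrow> 'x set" where
  "Union_sub S = (\<lambda>s. \<Union>A\<in>S. A s)"

(* functors Sub(X)^op -> Sets: sections sec K A, restriction res K A B : sec K A -> sec K B for B \<le> A *)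
type_synonym ('d,'x,'k) psh =
  "(('d list \<Rightarrow> 'x set) \<Rightarrow> 'k set) \<times> (('d list \<Rightarrow> 'x set) \<Rightarrow> ('d list \<Rightarrow> 'x set) \<Rightarrow> 'k \<Rightarrow> 'k)"

definition sec :: "('d,'x,'k) psh \<Rightarrow> ('d list \<Rightarrow> 'x set) \<Rightarrow> 'k set" where "sec K = fst K"
definition res :: "('d,'x,'k) psh \<Rightarrow> ('d list \<Rightarrow> 'x set) \<Rightarrow> ('d list \<Rightarrow> 'x set) \<Rightarrow> 'k \<Rightarrow> 'k"
  where "res K = snd K"

definition is_psh :: "('d,'x) schema \<Rightarrow> ('d,'x,'k) psh \<Rightarrow> bool" where
  "is_psh X K \<longleftrightarrow>
     (\<forall>A\<in>subs X. \<forall>B\<in>subs X. B \<le> A \<longrightarrow> (\<forall>k\<in>sec K A. res K A B k \<in> sec K B)) \<and>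
     (\<forall>A\<in>subs X. \<forall>k\<in>sec K A. res K A A k = k) \<and>
     (\<forall>A\<in>subs X. \<forall>B\<in>subs X. \<forall>C\<in>subs X. C \<le> B \<longrightarrow> B \<le> A \<longrightarrow>
        (\<forall>k\<in>sec K A. res K B C (res K A B k) = res K A C k))"

(* Sheaf condition: for every diagram given by a downward closed family S of
   subschemas (a sieve, viewed as a full subposet of Sub(X)),
   K(colim S) -> lim (K restricted to S) is bijective. *)
definition is_sheaf :: "('d,'x) schema \<Rightarrow> ('d,'x,'k) psh \<Rightarrow> bool" where
  "is_sheaf X K \<longleftrightarrow> is_psh X K \<and>
     (\<forall>S. S \<subseteq> subs X \<longrightarrow> (\<forall>A\<in>S. \<forall>B\<in>subs X. B \<le> A \<longrightarrow> B \<in> S) \<longrightarrow>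
        bij_betw (\<lambda>k. \<lambda>A\<in>S. res K (Union_sub S) A k) (sec K (Union_sub S))
          {F \<in> extensional S. (\<forall>A\<in>S. F A \<in> sec K A) \<and>
                              (\<forall>A\<in>S. \<forall>B\<in>S. B \<le> A \<longrightarrow> res K A B (F A) = F B)})"

definition psh_nat :: "('d,'x) schema \<Rightarrow> ('d,'x,'k) psh \<Rightarrow> ('d,'x,'l) psh
                       \<Rightarrow> (('d list \<Rightarrow> 'x set) \<Rightarrow> 'k \<Rightarrow> 'l) \<Rightarrow> bool" where
  "psh_nat X K L \<alpha> \<longleftrightarrow>
     (\<forall>A\<in>subs X. \<forall>k\<in>sec K A. \<alpha> A k \<in> sec L A) \<and>
     (\<forall>A\<in>subs X. \<forall>B\<in>subs X. B \<le> A \<longrightarrow> (\<forall>k\<in>sec K A. \<alpha> B (res K A B k) = res L A B (\<alpha> A k)))"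

(* universal sheaf U_X(A) = Hom(A, Gamma^pi) (transformations taken extensional) *)
definition UX :: "('u \<Rightarrow> 'd) \<Rightarrow> ('d,'x) schema \<Rightarrow> ('d,'x,'d list \<Rightarrow> 'x \<Rightarrow> 'u list) psh" where
  "UX \<pi> X = (\<lambda>A. {h. nat_on X A (Gamma \<pi>) h \<and> (\<forall>s x. x \<notin> A s \<longrightarrow> h s x = undefined)},
             \<lambda>A B h. \<lambda>s x. if x \<in> B s then h s x else undefined)"

type_synonym ('d,'x,'k,'u) db =
  "('d,'x,'k) psh \<times> (('d list \<Rightarrow> 'x set) \<Rightarrow> 'k \<Rightarrow> ('d list \<Rightarrow> 'x \<Rightarrow> 'u list))"

definition is_db :: "('u \<Rightarrow> 'd) \<Rightarrow> ('d,'x) schema \<Rightarrow> ('d,'x,'k,'u) db \<Rightarrow> bool" where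
  "is_db \<pi> X D \<longleftrightarrow> is_sheaf X (fst D) \<and> psh_nat X (fst D) (UX \<pi> X) (snd D)"

definition dbhom :: "('d,'x) schema \<Rightarrow> ('d,'x,'k,'u) db \<Rightarrow> ('d,'x,'l,'u) db
                     \<Rightarrow> (('d list \<Rightarrow> 'x set) \<Rightarrow> 'k \<Rightarrow> 'l) set" where
  "dbhom X D D' = {\<alpha>. psh_nat X (fst D) (fst D') \<alpha> \<and>
      (\<forall>A\<in>subs X. \<forall>k\<in>sec (fst D) A. snd D' A (\<alpha> A k) = snd D A k) \<and>
      (\<forall>A k. \<not> (A \<in> subs X \<and> k \<in> sec (fst D) A) \<longrightarrow> \<alpha> A k = undefined)}"

definition dbcomp :: "('d,'x) schema \<Rightarrow> ('d,'x,'k) psh \<Rightarrow> (('d list \<Rightarrow> 'x set) \<Rightarrow> 'l \<Rightarrow> 'm)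
                      \<Rightarrow> (('d list \<Rightarrow> 'x set) \<Rightarrow> 'k \<Rightarrow> 'l) \<Rightarrow> (('d list \<Rightarrow> 'x set) \<Rightarrow> 'k \<Rightarrow> 'm)" where
  "dbcomp X K \<beta> \<alpha> = (\<lambda>A k. if A \<in> subs X \<and> k \<in> sec K A then \<beta> A (\<alpha> A k) else undefined)"

definition img :: "('d list \<Rightarrow> 'y \<Rightarrow> 'x) \<Rightarrow> ('d list \<Rightarrow> 'y set) \<Rightarrow> 'd list \<Rightarrow> 'x set" where
  "img f B = (\<lambda>s. f s ` B s)"

definition preim :: "('d,'y) schema \<Rightarrow> ('d list \<Rightarrow> 'y \<Rightarrow> 'x) \<Rightarrow> ('d list \<Rightarrow> 'x set) \<Rightarrow> 'd list \<Rightarrow> 'y set" where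
  "preim Y f A = (\<lambda>s. {y \<in> ob Y s. f s y \<in> A s})"

(* pullback f^*(X,K,tau) = (Y, f^*K, U_f o f^*tau) *)
definition pullback_db :: "('d list \<Rightarrow> 'y \<Rightarrow> 'x) \<Rightarrow> ('d,'x,'k,'u) db \<Rightarrow> ('d,'y,'k,'u) db" where
  "pullback_db f D =
     ((\<lambda>B. sec (fst D) (img f B), \<lambda>B B'. res (fst D) (img f B) (img f B')),
      \<lambda>B k. \<lambda>s y. if y \<in> B s then snd D (img f B) k s (f s y) else undefined)"

definition pullback_mor :: "('d,'y) schema \<Rightarrow> ('d list \<Rightarrow> 'y \<Rightarrow> 'x) \<Rightarrow> ('d,'x,'k) psh
      \<Rightarrow> (('d list \<Rightarrow> 'x set) \<Rightarrow> 'k \<Rightarrow> 'l) \<Rightarrow> (('d list \<Rightarrow> 'y set) \<Rightarrow> 'k \<Rightarrow> 'l)" where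
  "pullback_mor Y f K \<alpha> =
     (\<lambda>B k. if B \<in> subs Y \<and> k \<in> sec K (img f B) then \<alpha> (img f B) k else undefined)"

(* push-forward f_+(Y,L,rho) = (X, U_X \<times>_{f_* U_Y} f_* L, projection) *)
definition pushforward_db :: "('u \<Rightarrow> 'd) \<Rightarrow> ('d,'x) schema \<Rightarrow> ('d,'y) schema
      \<Rightarrow> ('d list \<Rightarrow> 'y \<Rightarrow> 'x) \<Rightarrow> ('d,'y,'l,'u) db \<Rightarrow> ('d,'x,('d list \<Rightarrow> 'x \<Rightarrow> 'u list) \<times> 'l,'u) db" where
  "pushforward_db \<pi> X Y f E =
     ((\<lambda>A. {(h,l). h \<in> sec (UX \<pi> X) A \<and> l \<in> sec (fst E) (preim Y f A) \<and>
                   snd E (preim Y f A) l =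
                     (\<lambda>s y. if y \<in> preim Y f A s then h s (f s y) else undefined)},
       \<lambda>A B p. (res (UX \<pi> X) A B (fst p), res (fst E) (preim Y f A) (preim Y f B) (snd p))),
      \<lambda>A p. fst p)"

definition pushforward_mor :: "('u \<Rightarrow> 'd) \<Rightarrow> ('d,'x) schema \<Rightarrow> ('d,'y) schema
      \<Rightarrow> ('d list \<Rightarrow> 'y \<Rightarrow> 'x) \<Rightarrow> ('d,'y,'l,'u) db
      \<Rightarrow> (('d list \<Rightarrow> 'y set) \<Rightarrow> 'l \<Rightarrow> 'm)
      \<Rightarrow> (('d list \<Rightarrow> 'x set) \<Rightarrow> ('d list \<Rightarrow> 'x \<Rightarrow> 'u list) \<times> 'l \<Rightarrow> ('d list \<Rightarrow> 'x \<Rightarrow> 'u list) \<times> 'm)" where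
  "pushforward_mor \<pi> X Y f E \<beta> =
     (\<lambda>A p. if A \<in> subs X \<and> p \<in> sec (fst (pushforward_db \<pi> X Y f E)) A
            then (fst p, \<beta> (preim Y f A) (snd p)) else undefined)"

end

theory Submission
  imports Defs
begin

definition sieve :: "('d,'x) schema \<Rightarrow> ('d list \<Rightarrow> 'x set) set \<Rightarrow> bool" where
  "sieve X S \<longleftrightarrow> S \<subseteq> subs X \<and> (\<forall>A\<in>S. \<forall>B\<in>subs X. B \<le> A \<longrightarrow> B \<in> S)"

definition fam where "fam K S = {F \<in> extensional S. (\<forall>A\<in>S. F A \<in> sec K A) \<and>
                              (\<forall>A\<in>S. \<forall>B\<in>S. B \<le> A \<longrightarrow> res K A B (F A) = F B)}"

lemma subsD1: "A \<in> subs X \<Longrightarrow> x \<in> A s \<Longrightarrow> x \<in> ob X s" by (auto simp: subs_def)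
lemma subsD2: "A \<in> subs X \<Longrightarrow> smor s s' fl \<Longrightarrow> x \<in> A s' \<Longrightarrow> act X s' fl x \<in> A s"
  by (auto simp: subs_def)

lemma Union_sub_subs: assumes "S \<subseteq> subs X" shows "Union_sub S \<in> subs X"
  unfolding subs_def mem_Collect_eq
proof (intro conjI allI impI)
  fix s show "Union_sub S s \<subseteq> ob X s" using assms by (auto simp: Union_sub_def subs_def)
next
  fix s s' fl x assume "smor s s' fl" "x \<in> Union_sub S s'"
  then obtain A where "A \<in> S" "x \<in> A s'" by (auto simp: Union_sub_def)
  then show "act X s' fl x \<in> Union_sub S s" using assms \<open>smor s s' fl\<close> subsD2[of A X s s' fl x]
    by (auto simp: Union_sub_def)
qed
lemma Union_sub_ge: "A \<in> S \<Longrightarrow> A \<le> Union_sub S" by (auto simp: Union_sub_def le_fun_def)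
lemma Union_subE: "x \<in> Union_sub S s \<Longrightarrow> (\<And>A. A \<in> S \<Longrightarrow> x \<in> A s \<Longrightarrow> P) \<Longrightarrow> P"
  by (auto simp: Union_sub_def)

lemma inter_subs: "A \<in> subs X \<Longrightarrow> B \<in> subs X \<Longrightarrow> (\<lambda>s. A s \<inter> B s) \<in> subs X"
  by (auto simp: subs_def)
lemma inter_le1: "(\<lambda>s. A s \<inter> B s) \<le> A" by (auto simp: le_fun_def)
lemma inter_le2: "(\<lambda>s. A s \<inter> B s) \<le> B" by (auto simp: le_fun_def)

lemma psh_res_in: "is_psh X K \<Longrightarrow> A \<in> subs X \<Longrightarrow> B \<in> subs X \<Longrightarrow> B \<le> A \<Longrightarrow> k \<in> sec K A \<Longrightarrow> res K A B k \<in> sec K B"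
  unfolding is_psh_def by (elim conjE) (drule bspec, assumption, (drule bspec, assumption)?, (drule bspec, assumption)?, simp)
lemma psh_res_id: "is_psh X K \<Longrightarrow> A \<in> subs X \<Longrightarrow> k \<in> sec K A \<Longrightarrow> res K A A k = k"
  unfolding is_psh_def by (elim conjE) (drule bspec, assumption, (drule bspec, assumption)?, (drule bspec, assumption)?, simp)
lemma psh_res_comp: "is_psh X K \<Longrightarrow> A \<in> subs X \<Longrightarrow> B \<in> subs X \<Longrightarrow> C \<in> subs X \<Longrightarrow> C \<le> B \<Longrightarrow> B \<le> A \<Longrightarrow> k \<in> sec K A
   \<Longrightarrow> res K B C (res K A B k) = res K A C k"
  unfolding is_psh_def by (elim conjE) (drule bspec, assumption, (drule bspec, assumption)?, (drule bspec, assumption)?, simp)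

lemma sheafI:
  assumes psh: "is_psh X K"
  and sep: "\<And>S k1 k2. sieve X S \<Longrightarrow> k1 \<in> sec K (Union_sub S) \<Longrightarrow> k2 \<in> sec K (Union_sub S) \<Longrightarrow>
      (\<And>A. A\<in>S \<Longrightarrow> res K (Union_sub S) A k1 = res K (Union_sub S) A k2) \<Longrightarrow> k1 = k2"
  and glue: "\<And>S F. sieve X S \<Longrightarrow> F \<in> fam K S \<Longrightarrow> \<exists>k\<in>sec K (Union_sub S). \<forall>A\<in>S. res K (Union_sub S) A k = F A"
  shows "is_sheaf X K"
  unfolding is_sheaf_def fam_def[symmetric]
proof (intro conjI allI impI psh)
  fix S assume S: "S \<subseteq> subs X" "\<forall>A\<in>S. \<forall>B\<in>subs X. B \<le> A \<longrightarrow> B \<in> S"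
  hence sv: "sieve X S" by (simp add: sieve_def)
  let ?U = "Union_sub S"
  have U: "?U \<in> subs X" using S by (simp add: Union_sub_subs)
  show "bij_betw (\<lambda>k. \<lambda>A\<in>S. res K ?U A k) (sec K ?U) (fam K S)"
    unfolding bij_betw_def
  proof (intro conjI)
    show "inj_on (\<lambda>k. \<lambda>A\<in>S. res K ?U A k) (sec K ?U)"
    proof (rule inj_onI)
      fix k1 k2 assume k: "k1 \<in> sec K ?U" "k2 \<in> sec K ?U" and e: "(\<lambda>A\<in>S. res K ?U A k1) = (\<lambda>A\<in>S. res K ?U A k2)"
      have "\<And>A. A \<in> S \<Longrightarrow> res K ?U A k1 = res K ?U A k2"
        using e by (metis restrict_apply')
      then show "k1 = k2" using sep[OF sv k] by blast
    qed
    show "(\<lambda>k. \<lambda>A\<in>S. res K ?U A k) ` sec K ?U = fam K S"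
    proof
      show "(\<lambda>k. \<lambda>A\<in>S. res K ?U A k) ` sec K ?U \<subseteq> fam K S"
      proof
        fix F assume "F \<in> (\<lambda>k. \<lambda>A\<in>S. res K ?U A k) ` sec K ?U"
        then obtain k where k: "k \<in> sec K ?U" and F: "F = (\<lambda>A\<in>S. res K ?U A k)" by blast
        have "\<forall>A\<in>S. F A \<in> sec K A"
        proof
          fix A assume A: "A \<in> S"
          then show "F A \<in> sec K A" using psh_res_in[OF psh U _ Union_sub_ge[OF A] k] S F by auto
        qed
        moreover have "\<forall>A\<in>S. \<forall>B\<in>S. B \<le> A \<longrightarrow> res K A B (F A) = F B"
        proof (intro ballI impI)
          fix A B assume A: "A \<in> S" and B: "B \<in> S" and BA: "B \<le> A"
          show "res K A B (F A) = F B" using psh_res_comp[OF psh U _ _ BA Union_sub_ge[OF A] k] A B S(1) F by (simp add: subsetD)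
        qed
        ultimately show "F \<in> fam K S" unfolding fam_def using F by auto
      qed
      show "fam K S \<subseteq> (\<lambda>k. \<lambda>A\<in>S. res K ?U A k) ` sec K ?U"
      proof
        fix F assume F: "F \<in> fam K S"
        obtain k where k: "k \<in> sec K ?U" "\<forall>A\<in>S. res K ?U A k = F A" using glue[OF sv F] by blast
        have "F = (\<lambda>A\<in>S. res K ?U A k)"
          using F k unfolding fam_def by (auto simp: extensional_def)
        thus "F \<in> (\<lambda>k. \<lambda>A\<in>S. res K ?U A k) ` sec K ?U" using k by blast
      qed
    qed
  qed
qed

lemma sheaf_psh: "is_sheaf X K \<Longrightarrow> is_psh X K" by (simp add: is_sheaf_def)

lemma sheaf_bij: "is_sheaf X K \<Longrightarrow> sieve X S \<Longrightarrow>
  bij_betw (\<lambda>k. \<lambda>A\<in>S. res K (Union_sub S) A k) (sec K (Union_sub S)) (fam K S)"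
  unfolding is_sheaf_def sieve_def fam_def by (elim conjE) (drule spec[of _ S], simp)

lemma sheaf_sep:
  assumes "is_sheaf X K" "sieve X S" "k1 \<in> sec K (Union_sub S)" "k2 \<in> sec K (Union_sub S)"
    "\<And>A. A\<in>S \<Longrightarrow> res K (Union_sub S) A k1 = res K (Union_sub S) A k2"
  shows "k1 = k2"
proof -
  have "(\<lambda>A\<in>S. res K (Union_sub S) A k1) = (\<lambda>A\<in>S. res K (Union_sub S) A k2)"
    using assms(5) by (intro restrict_ext) auto
  thus ?thesis using sheaf_bij[OF assms(1,2)] assms(3,4) unfolding bij_betw_def inj_on_def by blast
qed

lemma sheaf_glue:
  assumes "is_sheaf X K" "sieve X S" "F \<in> fam K S"
  shows "\<exists>k\<in>sec K (Union_sub S). \<forall>A\<in>S. res K (Union_sub S) A k = F A"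
proof -
  obtain k where "k \<in> sec K (Union_sub S)" "F = (\<lambda>A\<in>S. res K (Union_sub S) A k)"
    using sheaf_bij[OF assms(1,2)] assms(3) unfolding bij_betw_def by blast
  thus ?thesis by auto
qed


lemma sec_UX: "sec (UX \<pi> X) A = {h. nat_on X A (Gamma \<pi>) h \<and> (\<forall>s x. x \<notin> A s \<longrightarrow> h s x = undefined)}"
  by (simp add: sec_def UX_def)
lemma res_UX: "res (UX \<pi> X) A B h = (\<lambda>s x. if x \<in> B s then h s x else undefined)"
  by (simp add: res_def UX_def)

lemma UX_psh: "is_psh X (UX \<pi> X)"
  unfolding is_psh_def
proof (intro conjI ballI impI)
  fix A B h assume A: "A \<in> subs X" and B: "B \<in> subs X" and BA: "B \<le> A" and h: "h \<in> sec (UX \<pi> X) A"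
  show "res (UX \<pi> X) A B h \<in> sec (UX \<pi> X) B"
    unfolding sec_UX res_UX mem_Collect_eq nat_on_def
  proof (intro conjI allI impI)
    fix s x assume "x \<in> B s"
    then show "(if x \<in> B s then h s x else undefined) \<in> ob (Gamma \<pi>) s"
      using h BA by (auto simp: sec_UX nat_on_def le_fun_def)
  next
    fix s s' fl x assume sm: "smor s s' fl" and x: "x \<in> B s'"
    have "act X s' fl x \<in> B s" using subsD2[OF B sm x] .
    then show "(if act X s' fl x \<in> B s then h s (act X s' fl x) else undefined) =
       act (Gamma \<pi>) s' fl (if x \<in> B s' then h s' x else undefined)"
    proof -
      have xA: "x \<in> A s'" using BA x by (auto simp: le_fun_def)
      have "h s (act X s' fl x) = act (Gamma \<pi>) s' fl (h s' x)"
        using h sm xA unfolding sec_UX nat_on_def by blast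
      then show ?thesis using x \<open>act X s' fl x \<in> B s\<close> by simp
    qed
  qed simp
next
  fix A h assume "A \<in> subs X" "h \<in> sec (UX \<pi> X) A"
  then show "res (UX \<pi> X) A A h = h" by (auto simp: sec_UX res_UX intro!: ext)
next
  fix A B C h assume "A \<in> subs X" "B \<in> subs X" "C \<in> subs X" "C \<le> B" "B \<le> A" "h \<in> sec (UX \<pi> X) A"
  then show "res (UX \<pi> X) B C (res (UX \<pi> X) A B h) = res (UX \<pi> X) A C h"
    by (auto simp: res_UX le_fun_def intro!: ext; blast)
qed

lemma sieve_inter: "sieve X S \<Longrightarrow> A \<in> S \<Longrightarrow> B \<in> S \<Longrightarrow> (\<lambda>s. A s \<inter> B s) \<in> S"
proof -
  assume S: "sieve X S" and A: "A \<in> S" and B: "B \<in> S"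
  have "A \<in> subs X" "B \<in> subs X" using S A B unfolding sieve_def by auto
  then have "(\<lambda>s. A s \<inter> B s) \<in> subs X" by (rule inter_subs)
  then show ?thesis using S A inter_le1[of A B] unfolding sieve_def by blast
qed

lemma sieve_subs: "sieve X S \<Longrightarrow> A \<in> S \<Longrightarrow> A \<in> subs X"
  unfolding sieve_def by blast

lemma UX_sheaf: "is_sheaf X (UX \<pi> X)"
proof (rule sheafI[OF UX_psh])
  fix S k1 k2
  assume S: "sieve X S" and k: "k1 \<in> sec (UX \<pi> X) (Union_sub S)" "k2 \<in> sec (UX \<pi> X) (Union_sub S)"
    and e: "\<And>A. A \<in> S \<Longrightarrow> res (UX \<pi> X) (Union_sub S) A k1 = res (UX \<pi> X) (Union_sub S) A k2"
  show "k1 = k2"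
  proof (intro ext)
    fix s x
    show "k1 s x = k2 s x"
    proof (cases "x \<in> Union_sub S s")
      case True
      then obtain A where A: "A \<in> S" "x \<in> A s" by (rule Union_subE)
      have "res (UX \<pi> X) (Union_sub S) A k1 s x = res (UX \<pi> X) (Union_sub S) A k2 s x"
        using e[OF A(1)] by simp
      then show ?thesis using A(2) by (simp add: res_UX)
    next
      case False
      then show ?thesis using k by (simp add: sec_UX)
    qed
  qed
next
  fix S F assume S: "sieve X S" and F: "F \<in> fam (UX \<pi> X) S"
  let ?U = "Union_sub S"
  have FA: "\<And>A. A \<in> S \<Longrightarrow> F A \<in> sec (UX \<pi> X) A" using F by (simp add: fam_def)
  have Fc: "\<And>A B. A \<in> S \<Longrightarrow> B \<in> S \<Longrightarrow> B \<le> A \<Longrightarrow> res (UX \<pi> X) A B (F A) = F B"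
    using F by (simp add: fam_def)
  have key: "F A1 s x = F A2 s x" if "A1 \<in> S" "A2 \<in> S" "x \<in> A1 s" "x \<in> A2 s" for A1 A2 s x
  proof -
    let ?I = "\<lambda>s. A1 s \<inter> A2 s"
    have I: "?I \<in> S" using sieve_inter[OF S that(1,2)] .
    have "F ?I s x = res (UX \<pi> X) A1 ?I (F A1) s x" using Fc[OF that(1) I inter_le1] by simp
    also have "\<dots> = F A1 s x" using that by (simp add: res_UX)
    finally have 1: "F ?I s x = F A1 s x" .
    have "F ?I s x = res (UX \<pi> X) A2 ?I (F A2) s x" using Fc[OF that(2) I inter_le2] by simp
    also have "\<dots> = F A2 s x" using that by (simp add: res_UX)
    finally have 2: "F ?I s x = F A2 s x" .
    from 1 2 show ?thesis by simp
  qed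
  define h where "h = (\<lambda>s x. if x \<in> ?U s then F (SOME A. A \<in> S \<and> x \<in> A s) s x else undefined)"
  have hA: "h s x = F A s x" if "A \<in> S" "x \<in> A s" for A s x
  proof -
    have ex: "\<exists>A. A \<in> S \<and> x \<in> A s" using that by blast
    have "x \<in> ?U s" using that by (auto simp: Union_sub_def)
    then have "h s x = F (SOME A. A \<in> S \<and> x \<in> A s) s x" by (simp add: h_def)
    also have "\<dots> = F A s x" using someI_ex[OF ex] key that by blast
    finally show ?thesis .
  qed
  have hsec: "h \<in> sec (UX \<pi> X) ?U"
    unfolding sec_UX mem_Collect_eq nat_on_def
  proof (intro conjI allI impI)
    fix s x assume "x \<in> ?U s"
    then obtain A where A: "A \<in> S" "x \<in> A s" by (rule Union_subE)
    then show "h s x \<in> ob (Gamma \<pi>) s" using hA FA[OF A(1)] by (auto simp: sec_UX nat_on_def)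
  next
    fix s s' fl x assume sm: "smor s s' fl" and xU: "x \<in> ?U s'"
    from xU obtain A where A: "A \<in> S" "x \<in> A s'" by (rule Union_subE)
    have ax: "act X s' fl x \<in> A s" using subsD2[OF sieve_subs[OF S A(1)] sm A(2)] .
    show "h s (act X s' fl x) = act (Gamma \<pi>) s' fl (h s' x)"
      using hA[OF A(1) ax] hA[OF A] FA[OF A(1)] sm A(2) by (auto simp: sec_UX nat_on_def)
  next
    fix s x assume "x \<notin> ?U s" then show "h s x = undefined" by (simp add: h_def)
  qed
  show "\<exists>k\<in>sec (UX \<pi> X) ?U. \<forall>A\<in>S. res (UX \<pi> X) ?U A k = F A"
  proof (intro bexI[OF _ hsec] ballI ext)
    fix A s x assume A: "A \<in> S"
    show "res (UX \<pi> X) ?U A h s x = F A s x"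
      using hA[OF A] FA[OF A] by (auto simp: res_UX sec_UX)
  qed
qed


lemma sec_pf: "sec (fst (pushforward_db \<pi> X Y f E)) A =
  {(h,l). h \<in> sec (UX \<pi> X) A \<and> l \<in> sec (fst E) (preim Y f A) \<and>
          snd E (preim Y f A) l = (\<lambda>s y. if y \<in> preim Y f A s then h s (f s y) else undefined)}"
  by (simp add: pushforward_db_def sec_def)
lemma res_pf: "res (fst (pushforward_db \<pi> X Y f E)) A B p =
   (res (UX \<pi> X) A B (fst p), res (fst E) (preim Y f A) (preim Y f B) (snd p))"
  by (simp add: pushforward_db_def res_def)
lemma snd_pf: "snd (pushforward_db \<pi> X Y f E) A p = fst p"
  by (simp add: pushforward_db_def)

lemma sec_pb: "sec (fst (pullback_db f D)) B = sec (fst D) (img f B)"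
  by (simp add: pullback_db_def sec_def)
lemma res_pb: "res (fst (pullback_db f D)) B B' = res (fst D) (img f B) (img f B')"
  by (simp add: pullback_db_def res_def)
lemma snd_pb: "snd (pullback_db f D) B k = (\<lambda>s y. if y \<in> B s then snd D (img f B) k s (f s y) else undefined)"
  by (simp add: pullback_db_def)

lemma natD1: "psh_nat X K L \<alpha> \<Longrightarrow> A \<in> subs X \<Longrightarrow> k \<in> sec K A \<Longrightarrow> \<alpha> A k \<in> sec L A"
  unfolding psh_nat_def by blast
lemma natD2: "psh_nat X K L \<alpha> \<Longrightarrow> A \<in> subs X \<Longrightarrow> B \<in> subs X \<Longrightarrow> B \<le> A \<Longrightarrow> k \<in> sec K A \<Longrightarrow>
   \<alpha> B (res K A B k) = res L A B (\<alpha> A k)"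
  unfolding psh_nat_def by blast

context
  fixes X :: "('d,'x) schema" and Y :: "('d,'y) schema" and f :: "'d list \<Rightarrow> 'y \<Rightarrow> 'x"
  assumes Ysch: "is_schema Y" and hom: "schema_hom Y X f"
begin

lemma f_ob: "y \<in> ob Y s \<Longrightarrow> f s y \<in> ob X s"
  using hom unfolding schema_hom_def nat_on_def by blast
lemma f_act: "smor s s' fl \<Longrightarrow> y \<in> ob Y s' \<Longrightarrow> f s (act Y s' fl y) = act X s' fl (f s' y)"
  using hom unfolding schema_hom_def nat_on_def by blast
lemma Y_act: "smor s s' fl \<Longrightarrow> y \<in> ob Y s' \<Longrightarrow> act Y s' fl y \<in> ob Y s"
  using Ysch unfolding is_schema_def by blast

lemma preim_subs: "A \<in> subs X \<Longrightarrow> preim Y f A \<in> subs Y"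
  unfolding subs_def preim_def mem_Collect_eq
  by (auto simp: Y_act f_act)

lemma img_subs: assumes B: "B \<in> subs Y" shows "img f B \<in> subs X"
  unfolding subs_def img_def mem_Collect_eq
proof (intro conjI allI impI)
  fix s show "f s ` B s \<subseteq> ob X s" using B f_ob by (auto simp: subs_def)
next
  fix s s' fl x assume sm: "smor s s' fl" and "x \<in> f s' ` B s'"
  then obtain y where y: "y \<in> B s'" "x = f s' y" by blast
  have "y \<in> ob Y s'" using B y by (auto simp: subs_def)
  then have "act X s' fl x = f s (act Y s' fl y)" using f_act[OF sm] y by simp
  moreover have "act Y s' fl y \<in> B s" using subsD2[OF B sm y(1)] .
  ultimately show "act X s' fl x \<in> f s ` B s" by blast
qed

lemma preim_mono: "B \<le> A \<Longrightarrow> preim Y f B \<le> preim Y f A"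
  by (auto simp: preim_def le_fun_def)
lemma img_mono: "B \<le> A \<Longrightarrow> img f B \<le> img f A"
  by (auto simp: img_def le_fun_def)
lemma img_preim_le: "img f (preim Y f A) \<le> A"
  by (auto simp: img_def preim_def le_fun_def)
lemma le_preim_img: "B \<in> subs Y \<Longrightarrow> B \<le> preim Y f (img f B)"
  by (auto simp: img_def preim_def le_fun_def subs_def)
lemma preim_img_preim: "preim Y f (img f (preim Y f A)) = preim Y f A"
  by (auto simp: img_def preim_def intro!: ext)
lemma img_preim_img: "B \<in> subs Y \<Longrightarrow> img f (preim Y f (img f B)) = img f B"
  by (auto simp: img_def preim_def subs_def intro!: ext)
lemma preim_inter: "preim Y f (\<lambda>s. A s \<inter> B s) = (\<lambda>s. preim Y f A s \<inter> preim Y f B s)"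
  by (auto simp: preim_def intro!: ext)

lemma preim_Union:
  assumes S: "S \<subseteq> subs X"
  shows "Union_sub {B \<in> subs Y. \<exists>A\<in>S. B \<le> preim Y f A} = preim Y f (Union_sub S)"
proof (intro ext set_eqI iffI)
  fix s y assume "y \<in> Union_sub {B \<in> subs Y. \<exists>A\<in>S. B \<le> preim Y f A} s"
  then obtain B A where "A \<in> S" "B \<le> preim Y f A" "y \<in> B s" by (auto simp: Union_sub_def)
  then show "y \<in> preim Y f (Union_sub S) s" by (auto simp: preim_def le_fun_def Union_sub_def)
next
  fix s y assume "y \<in> preim Y f (Union_sub S) s"
  then obtain A where A: "A \<in> S" "y \<in> preim Y f A s" by (auto simp: preim_def Union_sub_def)
  have "preim Y f A \<in> {B \<in> subs Y. \<exists>A\<in>S. B \<le> preim Y f A}"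
    using A S preim_subs by blast
  then show "y \<in> Union_sub {B \<in> subs Y. \<exists>A\<in>S. B \<le> preim Y f A} s"
    using A by (auto simp: Union_sub_def)
qed

lemma sieve_preim: "sieve X S \<Longrightarrow> sieve Y {B \<in> subs Y. \<exists>A\<in>S. B \<le> preim Y f A}"
  unfolding sieve_def by (auto intro: order_trans)



lemma pf_psh:
  assumes E: "is_db \<pi> Y E"
  shows "is_psh X (fst (pushforward_db \<pi> X Y f E))"
proof -
  have Lp: "is_psh Y (fst E)" using E by (simp add: is_db_def is_sheaf_def)
  have tn: "psh_nat Y (fst E) (UX \<pi> Y) (snd E)" using E by (simp add: is_db_def)
  show ?thesis
    unfolding is_psh_def
  proof (intro conjI ballI impI)
    fix A B p assume A: "A \<in> subs X" and B: "B \<in> subs X" and BA: "B \<le> A"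
      and p: "p \<in> sec (fst (pushforward_db \<pi> X Y f E)) A"
    obtain h l where hl: "p = (h,l)" by (cases p)
    have h: "h \<in> sec (UX \<pi> X) A" and l: "l \<in> sec (fst E) (preim Y f A)"
      and c: "snd E (preim Y f A) l = (\<lambda>s y. if y \<in> preim Y f A s then h s (f s y) else undefined)"
      using p hl by (auto simp: sec_pf)
    have pA: "preim Y f A \<in> subs Y" and pB: "preim Y f B \<in> subs Y" using A B preim_subs by auto
    have pBA: "preim Y f B \<le> preim Y f A" using BA by (rule preim_mono)
    have "snd E (preim Y f B) (res (fst E) (preim Y f A) (preim Y f B) l)
       = res (UX \<pi> Y) (preim Y f A) (preim Y f B) (snd E (preim Y f A) l)"
      using natD2[OF tn pA pB pBA l] .
    also have "\<dots> = (\<lambda>s y. if y \<in> preim Y f B s then res (UX \<pi> X) A B h s (f s y) else undefined)"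
      unfolding c res_UX using pBA BA by (auto simp: le_fun_def preim_def intro!: ext; blast)
    finally show "res (fst (pushforward_db \<pi> X Y f E)) A B p \<in> sec (fst (pushforward_db \<pi> X Y f E)) B"
      unfolding res_pf sec_pf hl using psh_res_in[OF UX_psh A B BA h] psh_res_in[OF Lp pA pB pBA l]
      by simp
  next
    fix A p assume A: "A \<in> subs X" and p: "p \<in> sec (fst (pushforward_db \<pi> X Y f E)) A"
    have pA: "preim Y f A \<in> subs Y" using A preim_subs by auto
    show "res (fst (pushforward_db \<pi> X Y f E)) A A p = p"
      using p psh_res_id[OF UX_psh A] psh_res_id[OF Lp pA] by (auto simp: res_pf sec_pf)
  next
    fix A B C p assume A: "A \<in> subs X" and B: "B \<in> subs X" and C: "C \<in> subs X"
      and CB: "C \<le> B" and BA: "B \<le> A" and p: "p \<in> sec (fst (pushforward_db \<pi> X Y f E)) A"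
    have pA: "preim Y f A \<in> subs Y" and pB: "preim Y f B \<in> subs Y" and pC: "preim Y f C \<in> subs Y"
      using A B C preim_subs by auto
    show "res (fst (pushforward_db \<pi> X Y f E)) B C (res (fst (pushforward_db \<pi> X Y f E)) A B p) =
          res (fst (pushforward_db \<pi> X Y f E)) A C p"
      using p psh_res_comp[OF UX_psh A B C CB BA] psh_res_comp[OF Lp pA pB pC preim_mono[OF CB] preim_mono[OF BA]]
      by (auto simp: res_pf sec_pf)
  qed
qed


lemma pf_sheaf:
  assumes E: "is_db \<pi> Y E"
  shows "is_sheaf X (fst (pushforward_db \<pi> X Y f E))"
proof (rule sheafI[OF pf_psh[OF E]])
  have Lsh: "is_sheaf Y (fst E)" using E by (simp add: is_db_def)
  have Lp: "is_psh Y (fst E)" using E by (simp add: is_db_def is_sheaf_def)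
  have tn: "psh_nat Y (fst E) (UX \<pi> Y) (snd E)" using E by (simp add: is_db_def)
  {
  fix S k1 k2 assume S: "sieve X S" and k1: "k1 \<in> sec (fst (pushforward_db \<pi> X Y f E)) (Union_sub S)"
    and k2: "k2 \<in> sec (fst (pushforward_db \<pi> X Y f E)) (Union_sub S)"
    and e: "\<And>A. A \<in> S \<Longrightarrow> res (fst (pushforward_db \<pi> X Y f E)) (Union_sub S) A k1 =
                            res (fst (pushforward_db \<pi> X Y f E)) (Union_sub S) A k2"
  let ?U = "Union_sub S"
  define S' where "S' = {B \<in> subs Y. \<exists>A\<in>S. B \<le> preim Y f A}"
  have SX: "S \<subseteq> subs X" using S by (simp add: sieve_def)
  have S'sv: "sieve Y S'" unfolding S'_def by (rule sieve_preim[OF S])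
  have US': "Union_sub S' = preim Y f ?U" unfolding S'_def by (rule preim_Union[OF SX])
  have U: "?U \<in> subs X" using SX by (rule Union_sub_subs)
  have pU: "preim Y f ?U \<in> subs Y" using U by (rule preim_subs)
  obtain h1 l1 where p1: "k1 = (h1,l1)" by (cases k1)
  obtain h2 l2 where p2: "k2 = (h2,l2)" by (cases k2)
  have h1: "h1 \<in> sec (UX \<pi> X) ?U" and l1: "l1 \<in> sec (fst E) (preim Y f ?U)"
    using k1 p1 by (auto simp: sec_pf)
  have h2: "h2 \<in> sec (UX \<pi> X) ?U" and l2: "l2 \<in> sec (fst E) (preim Y f ?U)"
    using k2 p2 by (auto simp: sec_pf)
  have eh: "res (UX \<pi> X) ?U A h1 = res (UX \<pi> X) ?U A h2" if "A \<in> S" for A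
    using e[OF that] p1 p2 by (simp add: res_pf)
  have el: "res (fst E) (preim Y f ?U) (preim Y f A) l1 = res (fst E) (preim Y f ?U) (preim Y f A) l2"
    if "A \<in> S" for A
    using e[OF that] p1 p2 by (simp add: res_pf)
  have "h1 = h2" by (rule sheaf_sep[OF UX_sheaf S h1 h2 eh])
  moreover have "l1 = l2"
  proof (rule sheaf_sep[OF Lsh S'sv])
    show "l1 \<in> sec (fst E) (Union_sub S')" "l2 \<in> sec (fst E) (Union_sub S')" using l1 l2 US' by auto
    fix B assume B: "B \<in> S'"
    then obtain A where A: "A \<in> S" and BA: "B \<le> preim Y f A" and Bs: "B \<in> subs Y" by (auto simp: S'_def)
    have As: "A \<in> subs X" using A SX by auto
    have pA: "preim Y f A \<in> subs Y" using As by (rule preim_subs)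
    have pAU: "preim Y f A \<le> preim Y f ?U" using Union_sub_ge[OF A] by (rule preim_mono)
    have "res (fst E) (preim Y f ?U) B l1 = res (fst E) (preim Y f A) B (res (fst E) (preim Y f ?U) (preim Y f A) l1)"
      using psh_res_comp[OF Lp pU pA Bs BA pAU l1] by simp
    also have "\<dots> = res (fst E) (preim Y f A) B (res (fst E) (preim Y f ?U) (preim Y f A) l2)"
      using el[OF A] by simp
    also have "\<dots> = res (fst E) (preim Y f ?U) B l2"
      using psh_res_comp[OF Lp pU pA Bs BA pAU l2] by simp
    finally show "res (fst E) (Union_sub S') B l1 = res (fst E) (Union_sub S') B l2" using US' by simp
  qed
  ultimately show "k1 = k2" using p1 p2 by simp
  }
  {
  fix S F assume S: "sieve X S" and F: "F \<in> fam (fst (pushforward_db \<pi> X Y f E)) S"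
  let ?U = "Union_sub S"
  define S' where "S' = {B \<in> subs Y. \<exists>A\<in>S. B \<le> preim Y f A}"
  have SX: "S \<subseteq> subs X" using S by (simp add: sieve_def)
  have S'sv: "sieve Y S'" unfolding S'_def by (rule sieve_preim[OF S])
  have US': "Union_sub S' = preim Y f ?U" unfolding S'_def by (rule preim_Union[OF SX])
  have U: "?U \<in> subs X" using SX by (rule Union_sub_subs)
  have pU: "preim Y f ?U \<in> subs Y" using U by (rule preim_subs)
  have FA: "F A \<in> sec (fst (pushforward_db \<pi> X Y f E)) A" if "A \<in> S" for A
    using F that by (simp add: fam_def)
  have FAh: "fst (F A) \<in> sec (UX \<pi> X) A" if "A \<in> S" for A
    using FA[OF that] by (auto simp: sec_pf)
  have FAl: "snd (F A) \<in> sec (fst E) (preim Y f A)" if "A \<in> S" for A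
    using FA[OF that] by (auto simp: sec_pf)
  have FAc: "snd E (preim Y f A) (snd (F A)) =
     (\<lambda>s y. if y \<in> preim Y f A s then fst (F A) s (f s y) else undefined)" if "A \<in> S" for A
    using FA[OF that] by (simp add: sec_pf case_prod_beta)
  have Fc: "res (fst (pushforward_db \<pi> X Y f E)) A B (F A) = F B" if "A \<in> S" "B \<in> S" "B \<le> A" for A B
    using F that by (simp add: fam_def)
  have Fch: "res (UX \<pi> X) A B (fst (F A)) = fst (F B)" if "A \<in> S" "B \<in> S" "B \<le> A" for A B
    using Fc[OF that] by (simp add: res_pf prod_eq_iff)
  have Fcl: "res (fst E) (preim Y f A) (preim Y f B) (snd (F A)) = snd (F B)" if "A \<in> S" "B \<in> S" "B \<le> A" for A B
    using Fc[OF that] by (simp add: res_pf prod_eq_iff)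
  have famh: "(\<lambda>A\<in>S. fst (F A)) \<in> fam (UX \<pi> X) S"
    unfolding fam_def using FAh Fch by auto
  obtain h where h: "h \<in> sec (UX \<pi> X) ?U" and hres: "\<And>A. A \<in> S \<Longrightarrow> res (UX \<pi> X) ?U A h = fst (F A)"
    using sheaf_glue[OF UX_sheaf S famh] by auto
  have wd: "res (fst E) (preim Y f A1) C (snd (F A1)) = res (fst E) (preim Y f A2) C (snd (F A2))"
    if A1: "A1 \<in> S" and A2: "A2 \<in> S" and Cs: "C \<in> subs Y" and C1: "C \<le> preim Y f A1" and C2: "C \<le> preim Y f A2"
    for A1 A2 C
  proof -
    let ?I = "\<lambda>s. A1 s \<inter> A2 s"
    have I: "?I \<in> S" using sieve_inter[OF S A1 A2] .
    have Is: "?I \<in> subs X" using I SX by auto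
    have pI: "preim Y f ?I \<in> subs Y" using Is by (rule preim_subs)
    have CI: "C \<le> preim Y f ?I" using C1 C2 by (simp add: preim_inter le_fun_def)
    have r: "res (fst E) (preim Y f A) C (snd (F A)) = res (fst E) (preim Y f ?I) C (snd (F ?I))"
      if A: "A \<in> S" and IA: "?I \<le> A" for A
    proof -
      have pA: "preim Y f A \<in> subs Y" using A SX preim_subs by auto
      have "res (fst E) (preim Y f A) C (snd (F A)) =
            res (fst E) (preim Y f ?I) C (res (fst E) (preim Y f A) (preim Y f ?I) (snd (F A)))"
        using psh_res_comp[OF Lp pA pI Cs CI preim_mono[OF IA] FAl[OF A]] by simp
      also have "\<dots> = res (fst E) (preim Y f ?I) C (snd (F ?I))" using Fcl[OF A I IA] by simp
      finally show ?thesis .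
    qed
    show ?thesis using r[OF A1 inter_le1] r[OF A2 inter_le2] by simp
  qed
  define ch where "ch = (\<lambda>B. SOME A. A \<in> S \<and> B \<le> preim Y f A)"
  define G where "G = (\<lambda>B\<in>S'. res (fst E) (preim Y f (ch B)) B (snd (F (ch B))))"
  have GB: "G B = res (fst E) (preim Y f A) B (snd (F A))" if B: "B \<in> S'" and A: "A \<in> S" and BA: "B \<le> preim Y f A" for B A
  proof -
    have ex: "\<exists>A. A \<in> S \<and> B \<le> preim Y f A" using A BA by blast
    have c: "ch B \<in> S" "B \<le> preim Y f (ch B)" using someI_ex[OF ex] unfolding ch_def by auto
    have Bs: "B \<in> subs Y" using B by (simp add: S'_def)
    show ?thesis unfolding G_def using B wd[OF c(1) A Bs c(2) BA] by simp
  qed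
  have famG: "G \<in> fam (fst E) S'"
    unfolding fam_def mem_Collect_eq
  proof (intro conjI ballI impI)
    show "G \<in> extensional S'" unfolding G_def by simp
  next
    fix B assume B: "B \<in> S'"
    then obtain A where A: "A \<in> S" and BA: "B \<le> preim Y f A" and Bs: "B \<in> subs Y" by (auto simp: S'_def)
    have pA: "preim Y f A \<in> subs Y" using A SX preim_subs by auto
    show "G B \<in> sec (fst E) B" using GB[OF B A BA] psh_res_in[OF Lp pA Bs BA FAl[OF A]] by simp
  next
    fix B C assume B: "B \<in> S'" and C: "C \<in> S'" and CB: "C \<le> B"
    then obtain A where A: "A \<in> S" and BA: "B \<le> preim Y f A" and Bs: "B \<in> subs Y" by (auto simp: S'_def)
    have Cs: "C \<in> subs Y" using C by (simp add: S'_def)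
    have CA: "C \<le> preim Y f A" using CB BA by (rule order_trans)
    have pA: "preim Y f A \<in> subs Y" using A SX preim_subs by auto
    show "res (fst E) B C (G B) = G C"
      using GB[OF B A BA] GB[OF C A CA] psh_res_comp[OF Lp pA Bs Cs CB BA FAl[OF A]] by simp
  qed
  obtain l where l0: "l \<in> sec (fst E) (Union_sub S')" and lres0: "\<And>B. B \<in> S' \<Longrightarrow> res (fst E) (Union_sub S') B l = G B"
    using sheaf_glue[OF Lsh S'sv famG] by auto
  have l: "l \<in> sec (fst E) (preim Y f ?U)" using l0 US' by simp
  have lres: "res (fst E) (preim Y f ?U) B l = G B" if "B \<in> S'" for B using lres0[OF that] US' by simp
  have pS': "preim Y f A \<in> S'" if "A \<in> S" for A
    using that SX preim_subs unfolding S'_def by auto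
  have lA: "res (fst E) (preim Y f ?U) (preim Y f A) l = snd (F A)" if A: "A \<in> S" for A
  proof -
    have pA: "preim Y f A \<in> subs Y" using A SX preim_subs by auto
    show ?thesis using lres[OF pS'[OF A]] GB[OF pS'[OF A] A order_refl] psh_res_id[OF Lp pA FAl[OF A]] by simp
  qed
  have tl: "snd E (preim Y f ?U) l = (\<lambda>s y. if y \<in> preim Y f ?U s then h s (f s y) else undefined)"
  proof (intro ext)
    fix s y
    show "snd E (preim Y f ?U) l s y = (if y \<in> preim Y f ?U s then h s (f s y) else undefined)"
    proof (cases "y \<in> preim Y f ?U s")
      case True
      then obtain A where A: "A \<in> S" and fy: "f s y \<in> A s" and yo: "y \<in> ob Y s"
        by (auto simp: preim_def Union_sub_def)
      have yA: "y \<in> preim Y f A s" using fy yo by (simp add: preim_def)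
      have pA: "preim Y f A \<in> subs Y" using A SX preim_subs by auto
      have pAU: "preim Y f A \<le> preim Y f ?U" using Union_sub_ge[OF A] by (rule preim_mono)
      have "snd E (preim Y f A) (res (fst E) (preim Y f ?U) (preim Y f A) l)
          = res (UX \<pi> Y) (preim Y f ?U) (preim Y f A) (snd E (preim Y f ?U) l)"
        using natD2[OF tn pU pA pAU l] .
      then have "snd E (preim Y f A) (snd (F A)) s y = snd E (preim Y f ?U) l s y"
        using lA[OF A] yA by (simp add: res_UX)
      then have "snd E (preim Y f ?U) l s y = fst (F A) s (f s y)"
        using FAc[OF A] yA by simp
      also have "\<dots> = res (UX \<pi> X) ?U A h s (f s y)" using hres[OF A] by simp
      also have "\<dots> = h s (f s y)" using fy by (simp add: res_UX)
      finally show ?thesis using True by simp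
    next
      case False
      have "snd E (preim Y f ?U) l \<in> sec (UX \<pi> Y) (preim Y f ?U)" using natD1[OF tn pU l] .
      then show ?thesis using False by (simp add: sec_UX)
    qed
  qed
  show "\<exists>k\<in>sec (fst (pushforward_db \<pi> X Y f E)) ?U. \<forall>A\<in>S. res (fst (pushforward_db \<pi> X Y f E)) ?U A k = F A"
  proof (intro bexI ballI)
    show "(h,l) \<in> sec (fst (pushforward_db \<pi> X Y f E)) ?U" using h l tl by (simp add: sec_pf)
    fix A assume A: "A \<in> S"
    show "res (fst (pushforward_db \<pi> X Y f E)) ?U A (h,l) = F A"
      using hres[OF A] lA[OF A] by (simp add: res_pf prod_eq_iff)
  qed
  }
qed

lemma pf_db:
  assumes E: "is_db \<pi> Y E"
  shows "is_db \<pi> X (pushforward_db \<pi> X Y f E)"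
  unfolding is_db_def
proof
  show "is_sheaf X (fst (pushforward_db \<pi> X Y f E))" using pf_sheaf[OF E] .
  show "psh_nat X (fst (pushforward_db \<pi> X Y f E)) (UX \<pi> X) (snd (pushforward_db \<pi> X Y f E))"
    unfolding psh_nat_def snd_pf by (auto simp: sec_pf res_pf)
qed


definition PhiM :: "('d,'x,'k,'u) db \<Rightarrow> (('d list \<Rightarrow> 'y set) \<Rightarrow> 'k \<Rightarrow> 'l)
   \<Rightarrow> (('d list \<Rightarrow> 'x set) \<Rightarrow> 'k \<Rightarrow> ('d list \<Rightarrow> 'x \<Rightarrow> 'u list) \<times> 'l)" where
  "PhiM D \<alpha> = (\<lambda>A k. if A \<in> subs X \<and> k \<in> sec (fst D) A
      then (snd D A k, \<alpha> (preim Y f A) (res (fst D) A (img f (preim Y f A)) k)) else undefined)"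

definition PsiM :: "('d,'x,'k,'u) db \<Rightarrow> ('d,'y,'l,'u) db
   \<Rightarrow> (('d list \<Rightarrow> 'x set) \<Rightarrow> 'k \<Rightarrow> ('d list \<Rightarrow> 'x \<Rightarrow> 'u list) \<times> 'l)
   \<Rightarrow> (('d list \<Rightarrow> 'y set) \<Rightarrow> 'k \<Rightarrow> 'l)" where
  "PsiM D E \<beta> = (\<lambda>B k. if B \<in> subs Y \<and> k \<in> sec (fst D) (img f B)
      then res (fst E) (preim Y f (img f B)) B (snd (\<beta> (img f B) k)) else undefined)"

lemma dbhomD1: "\<alpha> \<in> dbhom Z D D' \<Longrightarrow> psh_nat Z (fst D) (fst D') \<alpha>" by (simp add: dbhom_def)
lemma dbhomD2: "\<alpha> \<in> dbhom Z D D' \<Longrightarrow> A \<in> subs Z \<Longrightarrow> k \<in> sec (fst D) A \<Longrightarrow> snd D' A (\<alpha> A k) = snd D A k"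
  by (simp add: dbhom_def)
lemma dbhomD3: "\<alpha> \<in> dbhom Z D D' \<Longrightarrow> \<not> (A \<in> subs Z \<and> k \<in> sec (fst D) A) \<Longrightarrow> \<alpha> A k = undefined"
  by (simp add: dbhom_def)

lemma pi_subs: "A \<in> subs X \<Longrightarrow> img f (preim Y f A) \<in> subs X"
  by (intro img_subs preim_subs)

lemma Phi_hom:
  assumes D: "is_db \<pi> X D" and E: "is_db \<pi> Y E" and \<alpha>: "\<alpha> \<in> dbhom Y (pullback_db f D) E"
  shows "PhiM D \<alpha> \<in> dbhom X D (pushforward_db \<pi> X Y f E)"
proof -
  have Kp: "is_psh X (fst D)" using D by (simp add: is_db_def is_sheaf_def)
  have Lp: "is_psh Y (fst E)" using E by (simp add: is_db_def is_sheaf_def)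
  have tD: "psh_nat X (fst D) (UX \<pi> X) (snd D)" using D by (simp add: is_db_def)
  have an: "psh_nat Y (fst (pullback_db f D)) (fst E) \<alpha>" using dbhomD1[OF \<alpha>] .
  have in1: "PhiM D \<alpha> A k \<in> sec (fst (pushforward_db \<pi> X Y f E)) A" if A: "A \<in> subs X" and k: "k \<in> sec (fst D) A" for A k
  proof -
    let ?A' = "img f (preim Y f A)"
    have pA: "preim Y f A \<in> subs Y" using A by (rule preim_subs)
    have A's: "?A' \<in> subs X" using A by (rule pi_subs)
    have k': "res (fst D) A ?A' k \<in> sec (fst (pullback_db f D)) (preim Y f A)"
      unfolding sec_pb using psh_res_in[OF Kp A A's img_preim_le k] .
    have t: "snd D ?A' (res (fst D) A ?A' k) = res (UX \<pi> X) A ?A' (snd D A k)"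
      using natD2[OF tD A A's img_preim_le k] .
    have "snd E (preim Y f A) (\<alpha> (preim Y f A) (res (fst D) A ?A' k)) = snd (pullback_db f D) (preim Y f A) (res (fst D) A ?A' k)"
      using dbhomD2[OF \<alpha> pA k'] .
    also have "\<dots> = (\<lambda>s y. if y \<in> preim Y f A s then snd D A k s (f s y) else undefined)"
      unfolding snd_pb t res_UX by (auto simp: img_def intro!: ext)
    finally have c: "snd E (preim Y f A) (\<alpha> (preim Y f A) (res (fst D) A ?A' k)) = 
      (\<lambda>s y. if y \<in> preim Y f A s then snd D A k s (f s y) else undefined)" .
    show ?thesis unfolding PhiM_def sec_pf using A k natD1[OF tD A k] natD1[OF an pA k'] c by simp
  qed
  show ?thesis
    unfolding dbhom_def mem_Collect_eq
  proof (intro conjI ballI allI impI)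
    show "psh_nat X (fst D) (fst (pushforward_db \<pi> X Y f E)) (PhiM D \<alpha>)"
      unfolding psh_nat_def
    proof (intro conjI ballI impI)
      fix A k assume "A \<in> subs X" "k \<in> sec (fst D) A" then show "PhiM D \<alpha> A k \<in> sec (fst (pushforward_db \<pi> X Y f E)) A"
        by (rule in1)
    next
      fix A B k assume A: "A \<in> subs X" and B: "B \<in> subs X" and BA: "B \<le> A" and k: "k \<in> sec (fst D) A"
      let ?A' = "img f (preim Y f A)" and ?B' = "img f (preim Y f B)"
      have pA: "preim Y f A \<in> subs Y" using A by (rule preim_subs)
      have pB: "preim Y f B \<in> subs Y" using B by (rule preim_subs)
      have A's: "?A' \<in> subs X" using A by (rule pi_subs)
      have B's: "?B' \<in> subs X" using B by (rule pi_subs)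
      have pBA: "preim Y f B \<le> preim Y f A" using BA by (rule preim_mono)
      have B'A': "?B' \<le> ?A'" using pBA by (rule img_mono)
      have kB: "res (fst D) A B k \<in> sec (fst D) B" using psh_res_in[OF Kp A B BA k] .
      have k': "res (fst D) A ?A' k \<in> sec (fst D) ?A'" using psh_res_in[OF Kp A A's img_preim_le k] .
      have "res (fst D) B ?B' (res (fst D) A B k) = res (fst D) A ?B' k"
        using psh_res_comp[OF Kp A B B's img_preim_le BA k] .
      also have "\<dots> = res (fst D) ?A' ?B' (res (fst D) A ?A' k)"
        using psh_res_comp[OF Kp A A's B's B'A' img_preim_le k] by simp
      finally have r: "res (fst D) B ?B' (res (fst D) A B k) = res (fst D) ?A' ?B' (res (fst D) A ?A' k)" .
      have an2: "\<alpha> (preim Y f B) (res (fst (pullback_db f D)) (preim Y f A) (preim Y f B) (res (fst D) A ?A' k))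
        = res (fst E) (preim Y f A) (preim Y f B) (\<alpha> (preim Y f A) (res (fst D) A ?A' k))"
        using natD2[OF an pA pB pBA] k' by (simp add: sec_pb)
      show "PhiM D \<alpha> B (res (fst D) A B k) = res (fst (pushforward_db \<pi> X Y f E)) A B (PhiM D \<alpha> A k)"
        unfolding PhiM_def res_pf using A B kB k r an2 natD2[OF tD A B BA k] by (simp add: res_pb)
    qed
  next
    fix A k assume "A \<in> subs X" "k \<in> sec (fst D) A"
    then show "snd (pushforward_db \<pi> X Y f E) A (PhiM D \<alpha> A k) = snd D A k"
      by (simp add: snd_pf PhiM_def)
  next
    fix A k assume "\<not> (A \<in> subs X \<and> k \<in> sec (fst D) A)"
    then show "PhiM D \<alpha> A k = undefined" by (auto simp: PhiM_def)
  qed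
qed


lemma Psi_hom:
  assumes D: "is_db \<pi> X D" and E: "is_db \<pi> Y E" and \<beta>: "\<beta> \<in> dbhom X D (pushforward_db \<pi> X Y f E)"
  shows "PsiM D E \<beta> \<in> dbhom Y (pullback_db f D) E"
proof -
  have Kp: "is_psh X (fst D)" using D by (simp add: is_db_def is_sheaf_def)
  have Lp: "is_psh Y (fst E)" using E by (simp add: is_db_def is_sheaf_def)
  have tE: "psh_nat Y (fst E) (UX \<pi> Y) (snd E)" using E by (simp add: is_db_def)
  have bn: "psh_nat X (fst D) (fst (pushforward_db \<pi> X Y f E)) \<beta>" using dbhomD1[OF \<beta>] .
  have bfst: "fst (\<beta> A k) = snd D A k" if "A \<in> subs X" "k \<in> sec (fst D) A" for A k
    using dbhomD2[OF \<beta> that] by (simp add: snd_pf)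
  have bin: "\<beta> A k \<in> sec (fst (pushforward_db \<pi> X Y f E)) A" if "A \<in> subs X" "k \<in> sec (fst D) A" for A k
    using natD1[OF bn that] .
  have bl: "snd (\<beta> A k) \<in> sec (fst E) (preim Y f A)" if "A \<in> subs X" "k \<in> sec (fst D) A" for A k
    using bin[OF that] by (simp add: sec_pf case_prod_beta)
  have bc: "snd E (preim Y f A) (snd (\<beta> A k)) = (\<lambda>s y. if y \<in> preim Y f A s then snd D A k s (f s y) else undefined)"
    if "A \<in> subs X" "k \<in> sec (fst D) A" for A k
  proof -
    have "snd E (preim Y f A) (snd (\<beta> A k)) = (\<lambda>s y. if y \<in> preim Y f A s then fst (\<beta> A k) s (f s y) else undefined)"
      using bin[OF that] by (simp add: sec_pf case_prod_beta)
    then show ?thesis unfolding bfst[OF that] .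
  qed
  show ?thesis
    unfolding dbhom_def mem_Collect_eq
  proof (intro conjI ballI allI impI)
    show "psh_nat Y (fst (pullback_db f D)) (fst E) (PsiM D E \<beta>)"
      unfolding psh_nat_def
    proof (intro conjI ballI impI)
      fix B k assume B: "B \<in> subs Y" and k: "k \<in> sec (fst (pullback_db f D)) B"
      have iB: "img f B \<in> subs X" using B by (rule img_subs)
      have piB: "preim Y f (img f B) \<in> subs Y" using iB by (rule preim_subs)
      have kk: "k \<in> sec (fst D) (img f B)" using k by (simp add: sec_pb)
      show "PsiM D E \<beta> B k \<in> sec (fst E) B"
        unfolding PsiM_def using B kk psh_res_in[OF Lp piB B le_preim_img[OF B] bl[OF iB kk]] by simp
    next
      fix B C k assume B: "B \<in> subs Y" and C: "C \<in> subs Y" and CB: "C \<le> B" and k: "k \<in> sec (fst (pullback_db f D)) B"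
      have iB: "img f B \<in> subs X" using B by (rule img_subs)
      have iC: "img f C \<in> subs X" using C by (rule img_subs)
      have piB: "preim Y f (img f B) \<in> subs Y" using iB by (rule preim_subs)
      have piC: "preim Y f (img f C) \<in> subs Y" using iC by (rule preim_subs)
      have iCB: "img f C \<le> img f B" using CB by (rule img_mono)
      have piCB: "preim Y f (img f C) \<le> preim Y f (img f B)" using iCB by (rule preim_mono)
      have kk: "k \<in> sec (fst D) (img f B)" using k by (simp add: sec_pb)
      have kC: "res (fst D) (img f B) (img f C) k \<in> sec (fst D) (img f C)" using psh_res_in[OF Kp iB iC iCB kk] .
      have "snd (\<beta> (img f C) (res (fst D) (img f B) (img f C) k)) =
            res (fst E) (preim Y f (img f B)) (preim Y f (img f C)) (snd (\<beta> (img f B) k))"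
        using natD2[OF bn iB iC iCB kk] by (simp add: res_pf)
      then have "PsiM D E \<beta> C (res (fst (pullback_db f D)) B C k) =
          res (fst E) (preim Y f (img f C)) C (res (fst E) (preim Y f (img f B)) (preim Y f (img f C)) (snd (\<beta> (img f B) k)))"
        unfolding PsiM_def res_pb using C kC by simp
      also have "\<dots> = res (fst E) (preim Y f (img f B)) C (snd (\<beta> (img f B) k))"
        using psh_res_comp[OF Lp piB piC C le_preim_img[OF C] piCB bl[OF iB kk]] .
      also have "\<dots> = res (fst E) B C (res (fst E) (preim Y f (img f B)) B (snd (\<beta> (img f B) k)))"
        using psh_res_comp[OF Lp piB B C CB le_preim_img[OF B] bl[OF iB kk]] by simp
      also have "\<dots> = res (fst E) B C (PsiM D E \<beta> B k)"
        unfolding PsiM_def using B kk by simp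
      finally show "PsiM D E \<beta> C (res (fst (pullback_db f D)) B C k) = res (fst E) B C (PsiM D E \<beta> B k)" .
    qed
  next
    fix B k assume B: "B \<in> subs Y" and k: "k \<in> sec (fst (pullback_db f D)) B"
    have iB: "img f B \<in> subs X" using B by (rule img_subs)
    have piB: "preim Y f (img f B) \<in> subs Y" using iB by (rule preim_subs)
    have kk: "k \<in> sec (fst D) (img f B)" using k by (simp add: sec_pb)
    have BB: "B \<le> preim Y f (img f B)" using B by (rule le_preim_img)
    have "snd E B (PsiM D E \<beta> B k) = snd E B (res (fst E) (preim Y f (img f B)) B (snd (\<beta> (img f B) k)))"
      unfolding PsiM_def using B kk by simp
    also have "\<dots> = res (UX \<pi> Y) (preim Y f (img f B)) B (snd E (preim Y f (img f B)) (snd (\<beta> (img f B) k)))"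
      using natD2[OF tE piB B BB bl[OF iB kk]] .
    also have "\<dots> = snd (pullback_db f D) B k"
      unfolding bc[OF iB kk] res_UX snd_pb using BB by (auto simp: le_fun_def intro!: ext; blast)
    finally show "snd E B (PsiM D E \<beta> B k) = snd (pullback_db f D) B k" .
  next
    fix B k assume "\<not> (B \<in> subs Y \<and> k \<in> sec (fst (pullback_db f D)) B)"
    then show "PsiM D E \<beta> B k = undefined" by (auto simp: PsiM_def sec_pb)
  qed
qed

lemma Psi_Phi:
  assumes D: "is_db \<pi> X D" and E: "is_db \<pi> Y E" and \<alpha>: "\<alpha> \<in> dbhom Y (pullback_db f D) E"
  shows "PsiM D E (PhiM D \<alpha>) = \<alpha>"
proof (intro ext)
  fix B k
  have Kp: "is_psh X (fst D)" using D by (simp add: is_db_def is_sheaf_def)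
  have an: "psh_nat Y (fst (pullback_db f D)) (fst E) \<alpha>" using dbhomD1[OF \<alpha>] .
  show "PsiM D E (PhiM D \<alpha>) B k = \<alpha> B k"
  proof (cases "B \<in> subs Y \<and> k \<in> sec (fst D) (img f B)")
    case True
    then have B: "B \<in> subs Y" and kk: "k \<in> sec (fst D) (img f B)" by auto
    have iB: "img f B \<in> subs X" using B by (rule img_subs)
    have piB: "preim Y f (img f B) \<in> subs Y" using iB by (rule preim_subs)
    have BB: "B \<le> preim Y f (img f B)" using B by (rule le_preim_img)
    have ipi: "img f (preim Y f (img f B)) = img f B" using B by (rule img_preim_img)
    have kid: "res (fst D) (img f B) (img f B) k = k" using psh_res_id[OF Kp iB kk] .
    have "PsiM D E (PhiM D \<alpha>) B k = res (fst E) (preim Y f (img f B)) B (\<alpha> (preim Y f (img f B)) k)"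
      unfolding PsiM_def PhiM_def using B kk iB ipi kid by simp
    also have "\<dots> = \<alpha> B (res (fst (pullback_db f D)) (preim Y f (img f B)) B k)"
      using natD2[OF an piB B BB] kk ipi by (simp add: sec_pb)
    also have "\<dots> = \<alpha> B k" using ipi kid by (simp add: res_pb)
    finally show ?thesis .
  next
    case False
    then show ?thesis using dbhomD3[OF \<alpha>, of B k] by (auto simp: PsiM_def sec_pb)
  qed
qed

lemma Phi_Psi:
  assumes D: "is_db \<pi> X D" and E: "is_db \<pi> Y E" and \<beta>: "\<beta> \<in> dbhom X D (pushforward_db \<pi> X Y f E)"
  shows "PhiM D (PsiM D E \<beta>) = \<beta>"
proof (intro ext)
  fix A k
  have Kp: "is_psh X (fst D)" using D by (simp add: is_db_def is_sheaf_def)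
  have Lp: "is_psh Y (fst E)" using E by (simp add: is_db_def is_sheaf_def)
  have bn: "psh_nat X (fst D) (fst (pushforward_db \<pi> X Y f E)) \<beta>" using dbhomD1[OF \<beta>] .
  show "PhiM D (PsiM D E \<beta>) A k = \<beta> A k"
  proof (cases "A \<in> subs X \<and> k \<in> sec (fst D) A")
    case True
    then have A: "A \<in> subs X" and k: "k \<in> sec (fst D) A" by auto
    let ?A' = "img f (preim Y f A)"
    have pA: "preim Y f A \<in> subs Y" using A by (rule preim_subs)
    have A's: "?A' \<in> subs X" using A by (rule pi_subs)
    have ppA: "preim Y f ?A' = preim Y f A" by (rule preim_img_preim)
    have k': "res (fst D) A ?A' k \<in> sec (fst D) ?A'" using psh_res_in[OF Kp A A's img_preim_le k] .
    have bin: "\<beta> A k \<in> sec (fst (pushforward_db \<pi> X Y f E)) A" using natD1[OF bn A k] .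
    have bl: "snd (\<beta> A k) \<in> sec (fst E) (preim Y f A)" using bin by (simp add: sec_pf case_prod_beta)
    have bf: "fst (\<beta> A k) = snd D A k" using dbhomD2[OF \<beta> A k] by (simp add: snd_pf)
    have "snd (\<beta> ?A' (res (fst D) A ?A' k)) = res (fst E) (preim Y f A) (preim Y f A) (snd (\<beta> A k))"
      using natD2[OF bn A A's img_preim_le k] ppA by (simp add: res_pf)
    also have "\<dots> = snd (\<beta> A k)" using psh_res_id[OF Lp pA bl] .
    finally have s: "snd (\<beta> ?A' (res (fst D) A ?A' k)) = snd (\<beta> A k)" .
    have "PsiM D E \<beta> (preim Y f A) (res (fst D) A ?A' k) = snd (\<beta> A k)"
      unfolding PsiM_def using pA k' ppA s psh_res_id[OF Lp pA bl] by simp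
    then show ?thesis unfolding PhiM_def using A k bf by (simp add: prod_eq_iff)
  next
    case False
    then show ?thesis using dbhomD3[OF \<beta>, of A k] by (auto simp: PhiM_def)
  qed
qed


lemma nat_eq:
  assumes D: "is_db \<pi> X D" and D': "is_db \<pi> X D'" and E: "is_db \<pi> Y E" and E': "is_db \<pi> Y E'"
  and a: "a \<in> dbhom X D' D" and b: "b \<in> dbhom Y E E'" and \<alpha>: "\<alpha> \<in> dbhom Y (pullback_db f D) E"
  shows "PhiM D' (dbcomp Y (fst (pullback_db f D')) b (dbcomp Y (fst (pullback_db f D')) \<alpha> (pullback_mor Y f (fst D') a)))
     = dbcomp X (fst D') (pushforward_mor \<pi> X Y f E b) (dbcomp X (fst D') (PhiM D \<alpha>) a)"
proof (intro ext)
  fix A k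
  have K'p: "is_psh X (fst D')" using D' by (simp add: is_db_def is_sheaf_def)
  have an: "psh_nat X (fst D') (fst D) a" using dbhomD1[OF a] .
  have Pn: "psh_nat X (fst D) (fst (pushforward_db \<pi> X Y f E)) (PhiM D \<alpha>)" using dbhomD1[OF Phi_hom[OF D E \<alpha>]] .
  show "PhiM D' (dbcomp Y (fst (pullback_db f D')) b (dbcomp Y (fst (pullback_db f D')) \<alpha> (pullback_mor Y f (fst D') a))) A k
     = dbcomp X (fst D') (pushforward_mor \<pi> X Y f E b) (dbcomp X (fst D') (PhiM D \<alpha>) a) A k"
  proof (cases "A \<in> subs X \<and> k \<in> sec (fst D') A")
    case True
    then have A: "A \<in> subs X" and k: "k \<in> sec (fst D') A" by auto
    let ?A' = "img f (preim Y f A)"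
    have pA: "preim Y f A \<in> subs Y" using A by (rule preim_subs)
    have A's: "?A' \<in> subs X" using A by (rule pi_subs)
    have k'': "res (fst D') A ?A' k \<in> sec (fst D') ?A'" using psh_res_in[OF K'p A A's img_preim_le k] .
    have ak: "a A k \<in> sec (fst D) A" using natD1[OF an A k] .
    have pin: "PhiM D \<alpha> A (a A k) \<in> sec (fst (pushforward_db \<pi> X Y f E)) A" using natD1[OF Pn A ak] .
    have a1: "snd D A (a A k) = snd D' A k" using dbhomD2[OF a A k] .
    have a2: "a ?A' (res (fst D') A ?A' k) = res (fst D) A ?A' (a A k)" using natD2[OF an A A's img_preim_le k] .
    have L: "PhiM D' (dbcomp Y (fst (pullback_db f D')) b (dbcomp Y (fst (pullback_db f D')) \<alpha> (pullback_mor Y f (fst D') a))) A k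
        = (snd D' A k, b (preim Y f A) (\<alpha> (preim Y f A) (a ?A' (res (fst D') A ?A' k))))"
      unfolding PhiM_def dbcomp_def pullback_mor_def sec_pb using A k pA k'' by simp
    have R: "dbcomp X (fst D') (pushforward_mor \<pi> X Y f E b) (dbcomp X (fst D') (PhiM D \<alpha>) a) A k
        = (snd D A (a A k), b (preim Y f A) (\<alpha> (preim Y f A) (res (fst D) A ?A' (a A k))))"
    proof -
      have "dbcomp X (fst D') (pushforward_mor \<pi> X Y f E b) (dbcomp X (fst D') (PhiM D \<alpha>) a) A k
          = pushforward_mor \<pi> X Y f E b A (PhiM D \<alpha> A (a A k))"
        unfolding dbcomp_def using A k by simp
      also have "\<dots> = (fst (PhiM D \<alpha> A (a A k)), b (preim Y f A) (snd (PhiM D \<alpha> A (a A k))))"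
        unfolding pushforward_mor_def using A pin by simp
      also have "\<dots> = (snd D A (a A k), b (preim Y f A) (\<alpha> (preim Y f A) (res (fst D) A ?A' (a A k))))"
        unfolding PhiM_def using A ak by simp
      finally show ?thesis .
    qed
    show ?thesis unfolding L R a1 a2 ..
  next
    case False
    then show ?thesis unfolding PhiM_def dbcomp_def by auto
  qed
qed

end

theorem proposition5p1p1:
  fixes \<pi> :: "'u \<Rightarrow> 'd" and X :: "('d,'x) schema" and Y :: "('d,'y) schema"
    and f :: "'d list \<Rightarrow> 'y \<Rightarrow> 'x"
  assumes "is_schema X" and "is_schema Y" and "schema_hom Y X f"
  shows "(\<forall>E :: ('d,'y,'l,'u) db. is_db \<pi> Y E \<longrightarrow> is_db \<pi> X (pushforward_db \<pi> X Y f E)) \<and>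
    (\<exists>\<Phi>. (\<forall>(D :: ('d,'x,'k,'u) db) (E :: ('d,'y,'l,'u) db). is_db \<pi> X D \<longrightarrow> is_db \<pi> Y E \<longrightarrow>
            bij_betw (\<Phi> D E) (dbhom Y (pullback_db f D) E) (dbhom X D (pushforward_db \<pi> X Y f E))) \<and>
         (\<forall>D D' E E' a b \<alpha>. is_db \<pi> X D \<longrightarrow> is_db \<pi> X D' \<longrightarrow> is_db \<pi> Y E \<longrightarrow> is_db \<pi> Y E' \<longrightarrow>
            a \<in> dbhom X D' D \<longrightarrow> b \<in> dbhom Y E E' \<longrightarrow> \<alpha> \<in> dbhom Y (pullback_db f D) E \<longrightarrow>
            \<Phi> D' E' (dbcomp Y (fst (pullback_db f D')) b
                        (dbcomp Y (fst (pullback_db f D')) \<alpha> (pullback_mor Y f (fst D') a)))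
            = dbcomp X (fst D') (pushforward_mor \<pi> X Y f E b) (dbcomp X (fst D') (\<Phi> D E \<alpha>) a)))"
proof (intro conjI allI impI exI[of _ "\<lambda>D E. PhiM X Y f D"])
  fix E :: "('d,'y,'l,'u) db" assume "is_db \<pi> Y E"
  then show "is_db \<pi> X (pushforward_db \<pi> X Y f E)" using pf_db[OF assms(2,3)] by blast
next
  fix D :: "('d,'x,'k,'u) db" and E :: "('d,'y,'l,'u) db"
  assume D: "is_db \<pi> X D" and E: "is_db \<pi> Y E"
  show "bij_betw ((\<lambda>D E. PhiM X Y f D) D E) (dbhom Y (pullback_db f D) E) (dbhom X D (pushforward_db \<pi> X Y f E))"
    using bij_betw_byWitness[where f' = "PsiM Y f D E"]
      Psi_Phi[OF assms(2,3) D E] Phi_Psi[OF assms(2,3) D E] Phi_hom[OF assms(2,3) D E] Psi_hom[OF assms(2,3) D E]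
    by (simp add: image_subset_iff)
next
  fix D D' :: "('d,'x,'k,'u) db" and E E' :: "('d,'y,'l,'u) db" and a b \<alpha>
  assume h: "is_db \<pi> X D" "is_db \<pi> X D'" "is_db \<pi> Y E" "is_db \<pi> Y E'"
    "a \<in> dbhom X D' D" "b \<in> dbhom Y E E'" "\<alpha> \<in> dbhom Y (pullback_db f D) E"
  show "(\<lambda>D E. PhiM X Y f D) D' E' (dbcomp Y (fst (pullback_db f D')) b
                        (dbcomp Y (fst (pullback_db f D')) \<alpha> (pullback_mor Y f (fst D') a)))
            = dbcomp X (fst D') (pushforward_mor \<pi> X Y f E b) (dbcomp X (fst D') ((\<lambda>D E. PhiM X Y f D) D E \<alpha>) a)"
    using nat_eq[OF assms(2,3) h] by simp
qed

end
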